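(* Let $n$ be a non-negative integer. Then every subgroup of $\mathbb{R}^n$, equipped with the subspace topology inherited from the Euclidean topology, is $g$-reversible.
   Context: All topological groups are assumed Hausdorff. A topological group $G$ is called $g$-reversible if every continuous automorphism of $G$ (i.e. every continuous group isomorphism of $G$ onto itself) is an open map. $\mathbb{R}^n$ denotes the additive group with the Euclidean topology. *)

theory Defs
  imports "HOL-Analysis.Analysis"
begin

definition add_subgroup :: "'a::ab_group_add set \<Rightarrow> bool" where
  "add_subgroup H \<longleftrightarrow> 0 \<in> H \<and> (\<forall>x\<in>H. \<forall>y\<in>H. x + y \<in> H) \<and> (\<forall>x\<in>H. - x \<in> H)"

definition cont_automorphism :: "'a::{ab_group_add,topological_space} set \<Rightarrow> ('a \<Rightarrow> 'a) \<Rightarrow> bool" where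
  "cont_automorphism H f \<longleftrightarrow>
     bij_betw f H H \<and> (\<forall>x\<in>H. \<forall>y\<in>H. f (x + y) = f x + f y) \<and>
     continuous_map (top_of_set H) (top_of_set H) f"

definition g_reversible :: "'a::{ab_group_add,topological_space} set \<Rightarrow> bool" where
  "g_reversible H \<longleftrightarrow>
     (\<forall>f. cont_automorphism H f \<longrightarrow> open_map (top_of_set H) (top_of_set H) f)"

end

theory Submission
  imports Defs
begin

lemma sg_nat:
  fixes x :: "'a::real_vector"
  assumes H: "add_subgroup H" and x: "x \<in> H"
  shows "real n *\<^sub>R x \<in> H"
proof (induction n)
  case 0 show ?case using H by (simp add: add_subgroup_def)
next
  case (Suc n)
  have "real (Suc n) *\<^sub>R x = real n *\<^sub>R x + x" by (simp add: algebra_simps)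
  then show ?case using Suc H x unfolding add_subgroup_def by simp
qed

lemma int_split: "\<exists>n. k = int n \<or> k = - int n"
  by (metis int_cases2)

lemma sg_int:
  fixes x :: "'a::real_vector"
  assumes H: "add_subgroup H" and x: "x \<in> H"
  shows "real_of_int k *\<^sub>R x \<in> H"
proof -
  obtain n where "k = int n \<or> k = - int n" using int_split by blast
  then show ?thesis
  proof
    assume "k = int n" then show ?thesis using sg_nat[OF H x, of n] by simp
  next
    assume "k = - int n" then show ?thesis using sg_nat[OF H x, of n] H unfolding add_subgroup_def by simp
  qed
qed

lemma add_zero:
  assumes H: "add_subgroup H" and f: "\<forall>x\<in>H. \<forall>y\<in>H. f (x + y) = f x + f y"
  shows "f 0 = (0::'b::ab_group_add)"
proof -
  have "0 \<in> H" using H by (simp add: add_subgroup_def)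
  then have "f (0+0) = f 0 + f 0" using f by blast
  then show ?thesis by simp
qed

lemma add_nat:
  fixes f :: "'a::real_vector \<Rightarrow> 'b::real_vector"
  assumes H: "add_subgroup H" and f: "\<forall>x\<in>H. \<forall>y\<in>H. f (x + y) = f x + f y" and x: "x \<in> H"
  shows "f (real n *\<^sub>R x) = real n *\<^sub>R f x"
proof (induction n)
  case 0 then show ?case using add_zero[OF H f] by simp
next
  case (Suc n)
  have "f (real (Suc n) *\<^sub>R x) = f (real n *\<^sub>R x + x)" by (simp add: algebra_simps)
  also have "\<dots> = f (real n *\<^sub>R x) + f x" using f sg_nat[OF H x] x by blast
  finally show ?case using Suc by (simp add: algebra_simps)
qed

lemma add_neg:
  fixes f :: "'a::real_vector \<Rightarrow> 'b::real_vector"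
  assumes H: "add_subgroup H" and f: "\<forall>x\<in>H. \<forall>y\<in>H. f (x + y) = f x + f y" and x: "x \<in> H"
  shows "f (- x) = - f x"
proof -
  have "-x \<in> H" using H x by (simp add: add_subgroup_def)
  then have "f (x + -x) = f x + f (-x)" using f x by blast
  then show ?thesis using add_zero[OF H f] by (simp add: eq_neg_iff_add_eq_0 add.commute)
qed

lemma add_int:
  fixes f :: "'a::real_vector \<Rightarrow> 'b::real_vector"
  assumes H: "add_subgroup H" and f: "\<forall>x\<in>H. \<forall>y\<in>H. f (x + y) = f x + f y" and x: "x \<in> H"
  shows "f (real_of_int k *\<^sub>R x) = real_of_int k *\<^sub>R f x"
proof -
  obtain n where "k = int n \<or> k = - int n" using int_split by blast
  then show ?thesis
  proof
    assume "k = int n" then show ?thesis using add_nat[OF H f x, of n] by simp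
  next
    assume k: "k = - int n"
    have "f (real_of_int k *\<^sub>R x) = f (- (real n *\<^sub>R x))" using k by simp
    also have "\<dots> = - f (real n *\<^sub>R x)" using add_neg[OF H f sg_nat[OF H x]] by simp
    finally show ?thesis using add_nat[OF H f x, of n] k by simp
  qed
qed

lemma add_sum:
  fixes f :: "'a::real_vector \<Rightarrow> 'b::real_vector"
  assumes H: "add_subgroup H" and f: "\<forall>x\<in>H. \<forall>y\<in>H. f (x + y) = f x + f y"
    and B: "finite B" "B \<subseteq> H"
  shows "(\<Sum>b\<in>B. real_of_int (k b) *\<^sub>R b) \<in> H \<and>
         f (\<Sum>b\<in>B. real_of_int (k b) *\<^sub>R b) = (\<Sum>b\<in>B. real_of_int (k b) *\<^sub>R f b)"
  using B
proof (induction B rule: finite_induct)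
  case empty show ?case using H add_zero[OF H f] unfolding add_subgroup_def by simp
next
  case (insert a B)
  have aH: "a \<in> H" and BH: "B \<subseteq> H" using insert.prems by auto
  have cl: "\<And>x y. x \<in> H \<Longrightarrow> y \<in> H \<Longrightarrow> x + y \<in> H" using H unfolding add_subgroup_def by blast
  have a: "real_of_int (k a) *\<^sub>R a \<in> H" using sg_int[OF H aH] .
  note IH = insert.IH[OF BH]
  have S: "(\<Sum>b\<in>insert a B. real_of_int (k b) *\<^sub>R b) = real_of_int (k a) *\<^sub>R a + (\<Sum>b\<in>B. real_of_int (k b) *\<^sub>R b)"
    using insert.hyps by (rule sum.insert)
  have S2: "(\<Sum>b\<in>insert a B. real_of_int (k b) *\<^sub>R f b) = real_of_int (k a) *\<^sub>R f a + (\<Sum>b\<in>B. real_of_int (k b) *\<^sub>R f b)"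
    using insert.hyps by (rule sum.insert)
  have m: "(\<Sum>b\<in>insert a B. real_of_int (k b) *\<^sub>R b) \<in> H" unfolding S using cl[OF a IH[THEN conjunct1]] .
  have "f (\<Sum>b\<in>insert a B. real_of_int (k b) *\<^sub>R b) = f (real_of_int (k a) *\<^sub>R a) + f (\<Sum>b\<in>B. real_of_int (k b) *\<^sub>R b)"
    unfolding S using f a IH[THEN conjunct1] by blast
  also have "\<dots> = (\<Sum>b\<in>insert a B. real_of_int (k b) *\<^sub>R f b)"
    unfolding S2 IH[THEN conjunct2] add_int[OF H f aH, of "k a"] ..
  finally show ?case using m by blast
qed

lemma add_diff:
  fixes f :: "'a::real_vector \<Rightarrow> 'b::real_vector"
  assumes H: "add_subgroup H" and f: "\<forall>x\<in>H. \<forall>y\<in>H. f (x + y) = f x + f y"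
    and a: "a \<in> H" and b: "b \<in> H"
  shows "a - b \<in> H \<and> f (a - b) = f a - f b"
proof -
  have ab: "a - b \<in> H" using H a b unfolding add_subgroup_def by (metis diff_conv_add_uminus)
  have "f a = f ((a - b) + b)" by simp
  also have "\<dots> = f (a - b) + f b" using f ab b by blast
  finally show ?thesis using ab by (simp add: algebra_simps)
qed

lemma zero_on_H:
  fixes g :: "'a::euclidean_space \<Rightarrow> 'b::real_normed_vector"
  assumes H: "add_subgroup H" and g: "\<forall>x\<in>H. \<forall>y\<in>H. g (x + y) = g x + g y"
    and gc: "continuous_on H g" and B: "finite B" "B \<subseteq> H" "H \<subseteq> span B"
    and g0: "\<forall>b\<in>B. g b = 0" and h: "h \<in> H"
  shows "g h = 0"
proof (rule ccontr)
  assume ne: "g h \<noteq> 0"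
  have "h \<in> span B" using h B by blast
  then obtain u where u: "h = (\<Sum>v\<in>B. u v *\<^sub>R v)" using span_finite[OF B(1)] by blast
  define l where "l m = (\<Sum>b\<in>B. real_of_int \<lfloor>real m * u b\<rfloor> *\<^sub>R b)" for m :: nat
  define r where "r m = real m *\<^sub>R h - l m" for m
  define R where "R = (\<Sum>b\<in>B. norm b)"
  have lH: "l m \<in> H \<and> g (l m) = 0" for m
    using add_sum[OF H g B(1,2), of "\<lambda>b. \<lfloor>real m * u b\<rfloor>"] g0 unfolding l_def by simp
  have hm: "real m *\<^sub>R h \<in> H" for m using sg_nat[OF H h] .
  have rH: "r m \<in> H \<and> g (r m) = real m *\<^sub>R g h" for m
    using add_diff[OF H g hm lH[THEN conjunct1], of m m] lH[of m] add_nat[OF H g h, of m]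
    unfolding r_def by simp
  have req: "r m = (\<Sum>b\<in>B. frac (real m * u b) *\<^sub>R b)" for m
    unfolding r_def l_def u scaleR_sum_right frac_def
    by (simp add: sum_subtractf[symmetric] scaleR_diff_left)
  have rb: "r m \<in> cball 0 R" for m
  proof -
    have "norm (r m) \<le> (\<Sum>b\<in>B. norm (frac (real m * u b) *\<^sub>R b))"
      unfolding req by (rule norm_sum)
    also have "\<dots> \<le> R" unfolding R_def
    proof (rule sum_mono)
      fix b
      have "\<bar>frac (real m * u b)\<bar> \<le> 1" using frac_lt_1 frac_ge_0
        by (metis abs_of_nonneg less_eq_real_def)
      then show "norm (frac (real m * u b) *\<^sub>R b) \<le> norm b"
        by (simp add: mult_left_le_one_le)
    qed
    finally show ?thesis by simp
  qed
  have "0 \<in> H" using H by (simp add: add_subgroup_def)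
  then obtain d where d: "d > 0" "\<forall>x'\<in>H. dist x' 0 < d \<longrightarrow> dist (g x') (g 0) < norm (g h)"
    using gc ne unfolding continuous_on_iff by (meson zero_less_norm_iff)
  have gz: "g 0 = 0" using add_zero[OF H g] .
  have "seq_compact (cball (0::'a) R)" by (simp add: compact_imp_seq_compact)
  then obtain L \<sigma> where \<sigma>: "strict_mono (\<sigma>::nat\<Rightarrow>nat)" "(r \<circ> \<sigma>) \<longlonglongrightarrow> L"
    using rb unfolding seq_compact_def by meson
  then have "Cauchy (r \<circ> \<sigma>)" using LIMSEQ_imp_Cauchy by blast
  then obtain M where M: "\<forall>m\<ge>M. \<forall>n\<ge>M. dist ((r \<circ> \<sigma>) m) ((r \<circ> \<sigma>) n) < d"
    using d(1) unfolding Cauchy_def by blast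
  define j where "j = \<sigma> (Suc M)"
  define i where "i = \<sigma> M"
  have ij: "i < j" unfolding i_def j_def using \<sigma>(1) by (simp add: strict_mono_def)
  have dd: "dist (r j) (r i) < d" using M unfolding i_def j_def by auto
  have x: "r j - r i \<in> H \<and> g (r j - r i) = (real j - real i) *\<^sub>R g h"
    using add_diff[OF H g rH[THEN conjunct1] rH[THEN conjunct1], of j i] rH[of i] rH[of j]
    by (simp add: scaleR_diff_left)
  have "dist (r j - r i) 0 < d" using dd by (simp add: dist_norm)
  then have "norm (g (r j - r i)) < norm (g h)" using d(2) x gz by (auto simp: dist_norm)
  then have "\<bar>real j - real i\<bar> * norm (g h) < 1 * norm (g h)" using x by simp
  then have "\<bar>real j - real i\<bar> < 1" by (meson mult_less_cancel_right norm_ge_zero not_less)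
  then show False using ij by linarith
qed

lemma inj_span:
  fixes T :: "'a::euclidean_space \<Rightarrow> 'a"
  assumes T: "linear T" and B: "independent B" and TS: "T ` span B = span B"
  shows "inj_on T (span B)"
proof -
  have fB: "finite B" using B finiteI_independent by blast
  have sp: "span (T ` B) = span B" using TS linear_span_image[OF T, of B] by simp
  have c1: "card (T ` B) \<le> card B" using card_image_le[OF fB] .
  have dB: "dim (span B) = card B" using dim_span_eq_card_independent[OF B] .
  have sub: "T ` B \<subseteq> span B" using TS span_superset by blast
  have ind: "independent (T ` B)"
    by (rule card_le_dim_spanning[of "T ` B" "span B"]) (use sub sp fB c1 dB in auto)
  have "card (T ` B) = card B"
    using dim_span_eq_card_independent[OF ind] sp dB by simp
  then have "inj_on T B" using inj_on_iff_eq_card[OF fB] by blast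
  then show ?thesis using linear_inj_on_span_independent_image[OF T ind] by blast
qed

theorem theorem5p6:
  fixes H :: "'a::euclidean_space set"
  assumes "add_subgroup H"
  shows "g_reversible H"
  unfolding g_reversible_def
proof (intro allI impI)
  note H = assms
  fix f assume "cont_automorphism H f"
  then have bij: "bij_betw f H H" and fa: "\<forall>x\<in>H. \<forall>y\<in>H. f (x + y) = f x + f y"
    and fc: "continuous_on H f"
    unfolding cont_automorphism_def by auto
  obtain B where B: "B \<subseteq> H" "independent B" "H \<subseteq> span B"
    using maximal_independent_subset by blast
  have fB: "finite B" using B finiteI_independent by blast
  obtain T where T: "linear T" "\<forall>x\<in>B. T x = f x"
    using linear_independent_extend[OF B(2)] by blast
  define g where "g x = f x - T x" for x
  have ga: "\<forall>x\<in>H. \<forall>y\<in>H. g (x + y) = g x + g y"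
    using fa linear_add[OF T(1)] unfolding g_def by (simp add: algebra_simps)
  have gc: "continuous_on H g" unfolding g_def
    using T(1) by (intro continuous_on_diff[OF fc] linear_continuous_on) (auto simp: linear_conv_bounded_linear)
  have fT: "f x = T x" if "x \<in> H" for x
    using zero_on_H[OF H ga gc fB B(1,3) _ that] T(2) unfolding g_def by simp
  have spH: "span H = span B" using B by (metis span_mono span_span subset_antisym)
  have "T ` H = H" using fT bij bij_betw_imp_surj_on by (metis image_cong)
  then have TS: "T ` span B = span B" using linear_span_image[OF T(1), of H] spH by simp
  have inj: "inj_on T (span B)" using inj_span[OF T(1) B(2) TS] .
  have "\<forall>x\<in>span B. T x = 0 \<longrightarrow> x = 0"
    using inj linear_0[OF T(1)] span_zero by (metis inj_on_def)
  then obtain e where e: "e > 0" "\<forall>x\<in>span B. norm (T x) \<ge> e * norm x"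
    using injective_imp_isometric[of "span B" T] T(1) by (auto simp: linear_conv_bounded_linear subspace_span)
  show "open_map (top_of_set H) (top_of_set H) f"
    unfolding open_map_def
  proof (intro allI impI)
    fix U assume U: "openin (top_of_set H) U"
    then have UH: "U \<subseteq> H" and Uo: "\<forall>x\<in>U. \<exists>d>0. \<forall>x'\<in>H. dist x' x < d \<longrightarrow> x'\<in> U"
      unfolding openin_euclidean_subtopology_iff by auto
    show "openin (top_of_set H) (f ` U)"
      unfolding openin_euclidean_subtopology_iff
    proof (intro conjI ballI)
      show "f ` U \<subseteq> H" using UH bij bij_betw_imp_surj_on by blast
    next
      fix y assume "y \<in> f ` U"
      then obtain x where x: "x \<in> U" "y = f x" by blast
      obtain d where d: "d > 0" "\<forall>x'\<in>H. dist x' x < d \<longrightarrow> x'\<in> U" using Uo x(1) by blast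
      show "\<exists>d'>0. \<forall>y'\<in>H. dist y' y < d' \<longrightarrow> y' \<in> f ` U"
      proof (intro exI[of _ "e * d"] conjI ballI impI)
        show "e * d > 0" using e d by simp
      next
        fix y' assume y': "y' \<in> H" "dist y' y < e * d"
        then obtain x' where x': "x' \<in> H" "y' = f x'" using bij bij_betw_imp_surj_on by (metis imageE)
        have xH: "x \<in> H" using x UH by blast
        have "x' - x \<in> span B" using x' xH B(3) by (meson span_diff subsetD)
        then have "e * norm (x' - x) \<le> norm (T (x' - x))" using e by blast
        also have "T (x' - x) = y' - y" using x' x fT xH linear_diff[OF T(1)] by simp
        finally have "e * dist x' x < e * d" using y' by (simp add: dist_norm)
        then have "dist x' x < d" using e by simp
        then show "y' \<in> f ` U" using d x' by blast
      qed
    qed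
  qed
qed

end
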